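(* Let $q=p^k$ with $p$ prime, $Q_q=\mathrm{GF}(q)$, $Q_{q^2}=Q_q\times Q_q$, and $n\ge2$. Let $r(x_1,\dots,x_n)=\sum_{i,j=1}^n\alpha_{ij}x_ix_j+\sum_{i=1}^n\beta_i(x_i)$ with $\alpha_{ij}\in\mathrm{GF}(q)$ and arbitrary functions $\beta_i:Q_q\to Q_q$. Let $M\subseteq Q_{q^2}^n$ be the set of $((x_1,y_1),\dots,(x_n,y_n))$ satisfying $\sum_{i=1}^n x_i=0$ and $\sum_{i=1}^n y_i+r(x_1,\dots,x_n)=0$. Then $M$ is a topolinear MDS code.
   Context: An MDS code (code distance 2) of length $n$ over an alphabet of size $Q$ is a set $M\subseteq Q_Q^n$ with $|M|=Q^{n-1}$ and any two distinct elements at Hamming distance at least $2$. An isotopism of $Q_{Q}^n$ is a map $\overline{x}\mapsto(\tau_1x_1,\dots,\tau_nx_n)$ with $\tau_i$ permutations of the alphabet; $M$ is topolinear if the group of isotopisms mapping $M$ onto $M$ contains a subgroup of cardinality $|M|$ acting transitively on $M$. *)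

theory Defs
  imports Main "HOL-Library.Cardinality"
begin

text \<open>Words of length n over a finite alphabet, given by the (finite) type 'b;
  the alphabet is UNIV :: 'b set, of size CARD('b).\<close>

definition hamming_dist :: "'b list \<Rightarrow> 'b list \<Rightarrow> nat" where
  "hamming_dist xs ys = card {i. i < length xs \<and> xs ! i \<noteq> ys ! i}"

definition mds_code :: "nat \<Rightarrow> ('b::finite) list set \<Rightarrow> bool" where
  "mds_code n M \<longleftrightarrow> M \<subseteq> {xs. length xs = n} \<and>
     card M = CARD('b) ^ (n - 1) \<and>
     (\<forall>x\<in>M. \<forall>y\<in>M. x \<noteq> y \<longrightarrow> hamming_dist x y \<ge> 2)"

definition isotopism :: "nat \<Rightarrow> ('b \<Rightarrow> 'b) list \<Rightarrow> bool" where
  "isotopism n ts \<longleftrightarrow> length ts = n \<and> (\<forall>t\<in>set ts. bij t)"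

definition iso_apply :: "('b \<Rightarrow> 'b) list \<Rightarrow> 'b list \<Rightarrow> 'b list" where
  "iso_apply ts xs = map2 (\<lambda>t x. t x) ts xs"

definition iso_comp :: "('b \<Rightarrow> 'b) list \<Rightarrow> ('b \<Rightarrow> 'b) list \<Rightarrow> ('b \<Rightarrow> 'b) list" where
  "iso_comp ts ss = map2 (\<circ>) ts ss"

definition iso_inv :: "('b \<Rightarrow> 'b) list \<Rightarrow> ('b \<Rightarrow> 'b) list" where
  "iso_inv ts = map inv ts"

definition iso_id :: "nat \<Rightarrow> ('b \<Rightarrow> 'b) list" where
  "iso_id n = replicate n id"

definition autotopisms :: "nat \<Rightarrow> 'b list set \<Rightarrow> ('b \<Rightarrow> 'b) list set" where
  "autotopisms n M = {ts. isotopism n ts \<and> iso_apply ts ` M = M}"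

definition iso_subgroup :: "nat \<Rightarrow> ('b \<Rightarrow> 'b) list set \<Rightarrow> 'b list set \<Rightarrow> bool" where
  "iso_subgroup n H M \<longleftrightarrow> H \<subseteq> autotopisms n M \<and> iso_id n \<in> H \<and>
     (\<forall>g\<in>H. \<forall>h\<in>H. iso_comp g h \<in> H) \<and> (\<forall>h\<in>H. iso_inv h \<in> H)"

definition topolinear :: "nat \<Rightarrow> ('b::finite) list set \<Rightarrow> bool" where
  "topolinear n M \<longleftrightarrow> (\<exists>H. iso_subgroup n H M \<and> card H = card M \<and>
     (\<forall>x\<in>M. \<forall>y\<in>M. \<exists>h\<in>H. iso_apply h x = y))"

definition rfun :: "nat \<Rightarrow> (nat \<Rightarrow> nat \<Rightarrow> 'a::field) \<Rightarrow> (nat \<Rightarrow> 'a \<Rightarrow> 'a) \<Rightarrow> 'a list \<Rightarrow> 'a" where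
  "rfun n \<alpha> \<beta> xs = (\<Sum>i<n. \<Sum>j<n. \<alpha> i j * xs ! i * xs ! j) + (\<Sum>i<n. \<beta> i (xs ! i))"

definition code_M :: "nat \<Rightarrow> (nat \<Rightarrow> nat \<Rightarrow> 'a::field) \<Rightarrow> (nat \<Rightarrow> 'a \<Rightarrow> 'a) \<Rightarrow> ('a \<times> 'a) list set" where
  "code_M n \<alpha> \<beta> = {w. length w = n \<and> (\<Sum>i<n. fst (w ! i)) = 0 \<and>
      (\<Sum>i<n. snd (w ! i)) + rfun n \<alpha> \<beta> (map fst w) = 0}"

end

theory Submission
  imports Defs
begin

definition Lf :: "nat \<Rightarrow> (nat \<Rightarrow> nat \<Rightarrow> 'a::field) \<Rightarrow> (nat \<Rightarrow> 'a) \<Rightarrow> nat \<Rightarrow> 'a" where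
  "Lf n \<alpha> a i = (\<Sum>j<n. (\<alpha> i j + \<alpha> j i) * a j)"
definition Qf :: "nat \<Rightarrow> (nat \<Rightarrow> nat \<Rightarrow> 'a::field) \<Rightarrow> (nat \<Rightarrow> 'a) \<Rightarrow> 'a" where
  "Qf n \<alpha> a = (\<Sum>i<n. \<Sum>j<n. \<alpha> i j * a i * a j)"

lemma LQ: "(\<Sum>i<n. Lf n \<alpha> a i * b i) =
   (\<Sum>i<n. \<Sum>j<n. \<alpha> i j * b i * a j) + (\<Sum>i<n. \<Sum>j<n. \<alpha> i j * a i * b j)"
proof -
  have "(\<Sum>i<n. Lf n \<alpha> a i * b i) = (\<Sum>i<n. \<Sum>j<n. \<alpha> i j * b i * a j) + (\<Sum>i<n. \<Sum>j<n. \<alpha> j i * a j * b i)"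
    unfolding Lf_def sum_distrib_right sum.distrib[symmetric]
    by (intro sum.cong refl) (simp add: algebra_simps)
  also have "(\<Sum>i<n. \<Sum>j<n. \<alpha> j i * a j * b i) = (\<Sum>i<n. \<Sum>j<n. \<alpha> i j * a i * b j)"
    by (rule sum.swap)
  finally show ?thesis .
qed

lemma Q_add: "Qf n \<alpha> (\<lambda>i. a i + b i) = Qf n \<alpha> a + Qf n \<alpha> b + (\<Sum>i<n. Lf n \<alpha> a i * b i)"
  unfolding LQ Qf_def sum.distrib[symmetric]
  by (intro sum.cong refl) (simp add: algebra_simps)

lemma Q_neg: "Qf n \<alpha> (\<lambda>i. - a i) = Qf n \<alpha> a"
  unfolding Qf_def by simp

lemma Lf_add: "Lf n \<alpha> (\<lambda>i. a i + b i) i = Lf n \<alpha> a i + Lf n \<alpha> b i"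
  unfolding Lf_def sum.distrib[symmetric] by (intro sum.cong refl) (simp add: algebra_simps)

lemma Lf_neg: "Lf n \<alpha> (\<lambda>i. - a i) i = - Lf n \<alpha> a i"
  unfolding Lf_def sum_negf[symmetric] by (intro sum.cong refl) (simp add: algebra_simps)

lemma Lf_cong: "(\<And>i. i < n \<Longrightarrow> a i = b i) \<Longrightarrow> Lf n \<alpha> a k = Lf n \<alpha> b k"
  unfolding Lf_def by (intro sum.cong refl) simp

lemma rfun_cong: "(\<And>i. i < n \<Longrightarrow> xs!i = ys!i) \<Longrightarrow> rfun n \<alpha> \<beta> xs = rfun n \<alpha> \<beta> ys"
  unfolding rfun_def by (intro arg_cong2[where f="(+)"] sum.cong refl) auto

lemma rfun_shift:
  assumes "\<And>i. i < n \<Longrightarrow> ys!i = xs!i + a i"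
  shows "rfun n \<alpha> \<beta> ys = rfun n \<alpha> \<beta> xs +
     (\<Sum>i<n. Lf n \<alpha> a i * xs!i + (\<beta> i (xs!i + a i) - \<beta> i (xs!i))) + Qf n \<alpha> a"
proof -
  have "rfun n \<alpha> \<beta> ys = (\<Sum>i<n. \<Sum>j<n. \<alpha> i j * (xs!i + a i) * (xs!j + a j)) + (\<Sum>i<n. \<beta> i (xs!i + a i))"
    unfolding rfun_def by (intro arg_cong2[where f="(+)"] sum.cong refl) (auto simp: assms)
  also have "(\<Sum>i<n. \<Sum>j<n. \<alpha> i j * (xs!i + a i) * (xs!j + a j)) =
     (\<Sum>i<n. \<Sum>j<n. \<alpha> i j * xs!i * xs!j) + ((\<Sum>i<n. \<Sum>j<n. \<alpha> i j * xs!i * a j) + (\<Sum>i<n. \<Sum>j<n. \<alpha> i j * a i * xs!j)) + Qf n \<alpha> a"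
    unfolding Qf_def sum.distrib[symmetric] by (intro sum.cong refl) (simp add: algebra_simps)
  also have "(\<Sum>i<n. \<Sum>j<n. \<alpha> i j * xs!i * a j) + (\<Sum>i<n. \<Sum>j<n. \<alpha> i j * a i * xs!j) = (\<Sum>i<n. Lf n \<alpha> a i * xs!i)"
    by (simp add: LQ)
  finally show ?thesis unfolding rfun_def
    by (simp add: sum.distrib algebra_simps sum_subtractf)
qed


definition Tf :: "nat \<Rightarrow> (nat \<Rightarrow> nat \<Rightarrow> 'a::field) \<Rightarrow> (nat \<Rightarrow> 'a \<Rightarrow> 'a) \<Rightarrow> (nat \<Rightarrow> 'a) \<Rightarrow> (nat \<Rightarrow> 'a) \<Rightarrow> nat \<Rightarrow> 'a \<times> 'a \<Rightarrow> 'a \<times> 'a" where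
  "Tf n \<alpha> \<beta> a c i = (\<lambda>p. (fst p + a i, snd p + c i - (Lf n \<alpha> a i * fst p + (\<beta> i (fst p + a i) - \<beta> i (fst p)))))"

definition hm where "hm n \<alpha> \<beta> a c = map (Tf n \<alpha> \<beta> a c) [0..<n]"

definition Pset :: "nat \<Rightarrow> (nat \<Rightarrow> nat \<Rightarrow> 'a::field) \<Rightarrow> ((nat \<Rightarrow> 'a) \<times> (nat \<Rightarrow> 'a)) set" where
  "Pset n \<alpha> = {(a,c). (\<Sum>i<n. a i) = 0 \<and> (\<Sum>i<n. c i) = - Qf n \<alpha> a}"

definition Hset where "Hset n \<alpha> \<beta> = (\<lambda>(a,c). hm n \<alpha> \<beta> a c) ` Pset n \<alpha>"

lemma Tf_comp: "Tf n \<alpha> \<beta> a c i \<circ> Tf n \<alpha> \<beta> b d i =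
   Tf n \<alpha> \<beta> (\<lambda>j. a j + b j) (\<lambda>j. c j + d j - Lf n \<alpha> a j * b j) i"
  unfolding Tf_def by (rule ext) (simp add: Lf_add algebra_simps)

lemma Tf_zero: "(\<And>j. a j = 0) \<Longrightarrow> (\<And>j. c j = 0) \<Longrightarrow> Tf n \<alpha> \<beta> a c i = id"
  by (rule ext) (simp add: Tf_def Lf_def)

definition cinv where "cinv n \<alpha> a c = (\<lambda>j. - c j - Lf n \<alpha> a j * a j)"

lemma Tf_inv1: "Tf n \<alpha> \<beta> a c i \<circ> Tf n \<alpha> \<beta> (\<lambda>j. - a j) (cinv n \<alpha> a c) i = id"
  unfolding Tf_comp cinv_def by (rule Tf_zero) (simp_all add: Lf_neg)

lemma Tf_inv2: "Tf n \<alpha> \<beta> (\<lambda>j. - a j) (cinv n \<alpha> a c) i \<circ> Tf n \<alpha> \<beta> a c i = id"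
  unfolding Tf_comp cinv_def by (rule Tf_zero) (simp_all add: Lf_neg)

lemma Tf_bij: "bij (Tf n \<alpha> \<beta> a c i)"
  using Tf_inv2 Tf_inv1 by (rule o_bij)

lemma Tf_inv: "inv (Tf n \<alpha> \<beta> a c i) = Tf n \<alpha> \<beta> (\<lambda>j. - a j) (cinv n \<alpha> a c) i"
  using Tf_inv1 Tf_inv2 by (rule inv_unique_comp)

lemma Pset_comp: "(a,c) \<in> Pset n \<alpha> \<Longrightarrow> (b,d) \<in> Pset n \<alpha> \<Longrightarrow>
   ((\<lambda>j. a j + b j), (\<lambda>j. c j + d j - Lf n \<alpha> a j * b j)) \<in> Pset n \<alpha>"
  unfolding Pset_def by (simp add: sum.distrib sum_subtractf Q_add)

lemma Pset_inv: "(a,c) \<in> Pset n \<alpha> \<Longrightarrow> ((\<lambda>j. - a j), cinv n \<alpha> a c) \<in> Pset n \<alpha>"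
proof -
  assume "(a,c) \<in> Pset n \<alpha>"
  moreover have "(\<Sum>i<n. Lf n \<alpha> a i * a i) = 2 * Qf n \<alpha> a"
    unfolding LQ Qf_def by (simp add: algebra_simps)
  ultimately show ?thesis unfolding Pset_def cinv_def
    by (simp add: sum_negf sum_subtractf Q_neg)
qed

lemma iso_apply_hm: "length w = n \<Longrightarrow>
  iso_apply (hm n \<alpha> \<beta> a c) w = map (\<lambda>i. Tf n \<alpha> \<beta> a c i (w!i)) [0..<n]"
  unfolding iso_apply_def hm_def by (intro nth_equalityI) auto

lemma hm_into:
  assumes P: "(a,c) \<in> Pset n \<alpha>" and w: "w \<in> code_M n \<alpha> \<beta>"
  shows "iso_apply (hm n \<alpha> \<beta> a c) w \<in> code_M n \<alpha> \<beta>"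
proof -
  have len: "length w = n" using w by (simp add: code_M_def)
  let ?v = "iso_apply (hm n \<alpha> \<beta> a c) w"
  have v: "?v = map (\<lambda>i. Tf n \<alpha> \<beta> a c i (w!i)) [0..<n]" using len by (rule iso_apply_hm)
  have fv: "\<And>i. i < n \<Longrightarrow> fst (?v!i) = fst (w!i) + a i" by (simp add: v Tf_def len)
  have sv: "\<And>i. i < n \<Longrightarrow> snd (?v!i) = snd (w!i) + c i - (Lf n \<alpha> a i * fst (w!i) + (\<beta> i (fst (w!i) + a i) - \<beta> i (fst (w!i))))"
    by (simp add: v Tf_def len)
  have r: "rfun n \<alpha> \<beta> (map fst ?v) = rfun n \<alpha> \<beta> (map fst w) +
     (\<Sum>i<n. Lf n \<alpha> a i * (map fst w)!i + (\<beta> i ((map fst w)!i + a i) - \<beta> i ((map fst w)!i))) + Qf n \<alpha> a"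
    by (rule rfun_shift) (simp add: len v Tf_def)
  have s1: "(\<Sum>i<n. fst (?v!i)) = 0"
    using w P by (simp add: fv sum.distrib code_M_def Pset_def)
  have "(\<Sum>i<n. snd (?v!i)) = (\<Sum>i<n. snd (w!i)) + (\<Sum>i<n. c i) - (\<Sum>i<n. Lf n \<alpha> a i * fst (w!i) + (\<beta> i (fst (w!i) + a i) - \<beta> i (fst (w!i))))"
    by (simp add: sv sum.distrib sum_subtractf)
  moreover have "(\<Sum>i<n. Lf n \<alpha> a i * (map fst w)!i + (\<beta> i ((map fst w)!i + a i) - \<beta> i ((map fst w)!i)))
     = (\<Sum>i<n. Lf n \<alpha> a i * fst (w!i) + (\<beta> i (fst (w!i) + a i) - \<beta> i (fst (w!i))))"
    by (intro sum.cong refl) (simp add: len)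
  ultimately have "(\<Sum>i<n. snd (?v!i)) + rfun n \<alpha> \<beta> (map fst ?v) =
      ((\<Sum>i<n. snd (w!i)) + rfun n \<alpha> \<beta> (map fst w)) + ((\<Sum>i<n. c i) + Qf n \<alpha> a)"
    using r by (simp add: algebra_simps)
  also have "\<dots> = 0" using w P unfolding code_M_def Pset_def by simp
  finally have "(\<Sum>i<n. snd (?v!i)) + rfun n \<alpha> \<beta> (map fst ?v) = 0" .
  then show ?thesis using s1 by (simp add: code_M_def v)
qed


lemma len_M: "w \<in> code_M n \<alpha> \<beta> \<Longrightarrow> length w = n"
  by (simp add: code_M_def)

lemma iso_apply_len: "length (iso_apply (hm n \<alpha> \<beta> a c) w) = min n (length w)"
  by (simp add: iso_apply_def hm_def)

lemma hm_hm: "length w = n \<Longrightarrow> iso_apply (hm n \<alpha> \<beta> a c) (iso_apply (hm n \<alpha> \<beta> b d) w)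
   = map (\<lambda>i. (Tf n \<alpha> \<beta> a c i \<circ> Tf n \<alpha> \<beta> b d i) (w!i)) [0..<n]"
  by (simp add: iso_apply_hm iso_apply_len)

lemma hm_inv_apply: "length w = n \<Longrightarrow>
   iso_apply (hm n \<alpha> \<beta> a c) (iso_apply (hm n \<alpha> \<beta> (\<lambda>j. - a j) (cinv n \<alpha> a c)) w) = w"
  by (simp add: hm_hm Tf_inv1) (intro nth_equalityI; simp)

lemma hm_auto:
  assumes P: "(a,c) \<in> Pset n \<alpha>"
  shows "hm n \<alpha> \<beta> a c \<in> autotopisms n (code_M n \<alpha> \<beta>)"
proof -
  have "isotopism n (hm n \<alpha> \<beta> a c)"
    by (auto simp: isotopism_def hm_def Tf_bij)
  moreover have "iso_apply (hm n \<alpha> \<beta> a c) ` code_M n \<alpha> \<beta> = code_M n \<alpha> \<beta>"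
  proof
    show "iso_apply (hm n \<alpha> \<beta> a c) ` code_M n \<alpha> \<beta> \<subseteq> code_M n \<alpha> \<beta>"
      using hm_into[OF P] by blast
  next
    show "code_M n \<alpha> \<beta> \<subseteq> iso_apply (hm n \<alpha> \<beta> a c) ` code_M n \<alpha> \<beta>"
    proof
      fix v assume v: "v \<in> code_M n \<alpha> \<beta>"
      have "iso_apply (hm n \<alpha> \<beta> (\<lambda>j. - a j) (cinv n \<alpha> a c)) v \<in> code_M n \<alpha> \<beta>"
        by (rule hm_into[OF Pset_inv[OF P] v])
      moreover have "v = iso_apply (hm n \<alpha> \<beta> a c) (iso_apply (hm n \<alpha> \<beta> (\<lambda>j. - a j) (cinv n \<alpha> a c)) v)"
        using hm_inv_apply[OF len_M[OF v]] by simp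
      ultimately show "v \<in> iso_apply (hm n \<alpha> \<beta> a c) ` code_M n \<alpha> \<beta>" by blast
    qed
  qed
  ultimately show ?thesis by (simp add: autotopisms_def)
qed

lemma hm_comp: "iso_comp (hm n \<alpha> \<beta> a c) (hm n \<alpha> \<beta> b d) =
   hm n \<alpha> \<beta> (\<lambda>j. a j + b j) (\<lambda>j. c j + d j - Lf n \<alpha> a j * b j)"
  unfolding iso_comp_def hm_def by (intro nth_equalityI) (simp_all add: Tf_comp)

lemma hm_inv: "iso_inv (hm n \<alpha> \<beta> a c) = hm n \<alpha> \<beta> (\<lambda>j. - a j) (cinv n \<alpha> a c)"
  unfolding iso_inv_def hm_def by (simp add: Tf_inv)

lemma hm_id: "hm n \<alpha> \<beta> (\<lambda>j. 0) (\<lambda>j. 0) = iso_id n"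
  unfolding iso_id_def hm_def by (intro nth_equalityI) (simp_all add: Tf_zero)

lemma P_zero: "((\<lambda>j. 0), (\<lambda>j. 0)) \<in> Pset n \<alpha>"
  by (simp add: Pset_def Qf_def)

lemma H_subgroup: "iso_subgroup n (Hset n \<alpha> \<beta>) (code_M n \<alpha> \<beta>)"
  unfolding iso_subgroup_def
proof (intro conjI ballI)
  show "Hset n \<alpha> \<beta> \<subseteq> autotopisms n (code_M n \<alpha> \<beta>)"
    unfolding Hset_def using hm_auto by auto
  show "iso_id n \<in> Hset n \<alpha> \<beta>"
    unfolding Hset_def using P_zero hm_id by (metis (no_types, lifting) case_prod_conv image_eqI)
next
  fix g h assume "g \<in> Hset n \<alpha> \<beta>" "h \<in> Hset n \<alpha> \<beta>"
  then obtain a c b d where "(a,c) \<in> Pset n \<alpha>" "(b,d) \<in> Pset n \<alpha>" "g = hm n \<alpha> \<beta> a c" "h = hm n \<alpha> \<beta> b d"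
    unfolding Hset_def by auto
  then show "iso_comp g h \<in> Hset n \<alpha> \<beta>"
    unfolding Hset_def hm_comp
    by (intro image_eqI[where x="((\<lambda>j. a j + b j), (\<lambda>j. c j + d j - Lf n \<alpha> a j * b j))"] Pset_comp) (auto simp: hm_comp)
next
  fix h assume "h \<in> Hset n \<alpha> \<beta>"
  then obtain a c where "(a,c) \<in> Pset n \<alpha>" "h = hm n \<alpha> \<beta> a c"
    unfolding Hset_def by auto
  then show "iso_inv h \<in> Hset n \<alpha> \<beta>"
    unfolding Hset_def hm_inv
    by (intro image_eqI[where x="((\<lambda>j. - a j), cinv n \<alpha> a c)"] Pset_inv) (auto simp: hm_inv)
qed


lemma H_trans:
  assumes u: "u \<in> code_M n \<alpha> \<beta>" and v: "v \<in> code_M n \<alpha> \<beta>"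
  shows "\<exists>h\<in>Hset n \<alpha> \<beta>. iso_apply h u = v"
proof -
  have lu: "length u = n" and lv: "length v = n" using u v by (auto simp: code_M_def)
  define a where "a i = fst (v!i) - fst (u!i)" for i
  define D where "D i = Lf n \<alpha> a i * fst (u!i) + (\<beta> i (fst (u!i) + a i) - \<beta> i (fst (u!i)))" for i
  define c where "c i = snd (v!i) - snd (u!i) + D i" for i
  have r: "rfun n \<alpha> \<beta> (map fst v) = rfun n \<alpha> \<beta> (map fst u) +
     (\<Sum>i<n. Lf n \<alpha> a i * (map fst u)!i + (\<beta> i ((map fst u)!i + a i) - \<beta> i ((map fst u)!i))) + Qf n \<alpha> a"
    by (rule rfun_shift) (simp add: lu lv a_def)
  have rD: "(\<Sum>i<n. Lf n \<alpha> a i * (map fst u)!i + (\<beta> i ((map fst u)!i + a i) - \<beta> i ((map fst u)!i))) = (\<Sum>i<n. D i)"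
    by (intro sum.cong refl) (simp add: lu D_def)
  have sa: "(\<Sum>i<n. a i) = 0" using u v by (simp add: a_def sum_subtractf code_M_def)
  have "(\<Sum>i<n. c i) = (\<Sum>i<n. snd (v!i)) - (\<Sum>i<n. snd (u!i)) + (\<Sum>i<n. D i)"
    by (simp add: c_def sum.distrib sum_subtractf)
  also have "\<dots> = ((\<Sum>i<n. snd (v!i)) + rfun n \<alpha> \<beta> (map fst v)) - ((\<Sum>i<n. snd (u!i)) + rfun n \<alpha> \<beta> (map fst u)) - Qf n \<alpha> a"
    using r rD by (simp add: algebra_simps)
  also have "\<dots> = - Qf n \<alpha> a" using u v by (simp add: code_M_def)
  finally have "(a,c) \<in> Pset n \<alpha>" using sa by (simp add: Pset_def)
  moreover have "iso_apply (hm n \<alpha> \<beta> a c) u = v"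
    by (intro nth_equalityI) (auto simp: iso_apply_hm lu lv Tf_def a_def c_def D_def intro!: prod_eqI)
  ultimately show ?thesis unfolding Hset_def by force
qed

lemma H_inj:
  assumes g: "g \<in> Hset n \<alpha> \<beta>" and h: "h \<in> Hset n \<alpha> \<beta>" and z: "length z = n"
    and eq: "iso_apply g z = iso_apply h z"
  shows "g = h"
proof -
  obtain a c b d where g': "g = hm n \<alpha> \<beta> a c" and h': "h = hm n \<alpha> \<beta> b d"
    using g h unfolding Hset_def by auto
  have e: "\<And>i. i < n \<Longrightarrow> Tf n \<alpha> \<beta> a c i (z!i) = Tf n \<alpha> \<beta> b d i (z!i)"
  proof -
    fix i assume "i < n"
    then have "iso_apply g z ! i = iso_apply h z ! i" using eq by simp
    then show "Tf n \<alpha> \<beta> a c i (z!i) = Tf n \<alpha> \<beta> b d i (z!i)"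
      using \<open>i < n\<close> by (simp add: g' h' iso_apply_hm z)
  qed
  have ab: "\<And>i. i < n \<Longrightarrow> a i = b i"
    using e by (simp add: Tf_def)
  have L: "\<And>i. Lf n \<alpha> a i = Lf n \<alpha> b i" by (rule Lf_cong) (rule ab)
  have cd: "\<And>i. i < n \<Longrightarrow> c i = d i"
    using e ab L by (simp add: Tf_def)
  show ?thesis unfolding g' h' hm_def
    by (intro nth_equalityI) (simp_all add: Tf_def ab cd L)
qed


lemma sum_split_k: "(k::nat) < n \<Longrightarrow> (\<Sum>i<n. f i) = f k + (\<Sum>i\<in>{..<n} - {k}. f i)"
  by (rule sum.remove) auto

lemma M_unique:
  assumes u: "u \<in> code_M n \<alpha> \<beta>" and v: "v \<in> code_M n \<alpha> \<beta>"
    and ag: "\<And>i. i < n \<Longrightarrow> i \<noteq> k \<Longrightarrow> u!i = v!i"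
  shows "u = v"
proof (cases "k < n")
  case False
  then show ?thesis using u v ag by (intro nth_equalityI) (auto simp: code_M_def)
next
  case True
  have lu: "length u = n" and lv: "length v = n" using u v by (auto simp: code_M_def)
  have o1: "(\<Sum>i\<in>{..<n} - {k}. fst (u!i)) = (\<Sum>i\<in>{..<n} - {k}. fst (v!i))"
    by (intro sum.cong refl) (auto simp: ag)
  have "fst (u!k) + (\<Sum>i\<in>{..<n} - {k}. fst (u!i)) = fst (v!k) + (\<Sum>i\<in>{..<n} - {k}. fst (v!i))"
    using u v sum_split_k[OF True, of "\<lambda>i. fst (u!i)"] sum_split_k[OF True, of "\<lambda>i. fst (v!i)"]
    by (simp add: code_M_def)
  then have fk: "fst (u!k) = fst (v!k)" using o1 by simp
  have mf: "map fst u = map fst v"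
    using lu lv ag fk by (intro nth_equalityI) (auto, metis)
  have o2: "(\<Sum>i\<in>{..<n} - {k}. snd (u!i)) = (\<Sum>i\<in>{..<n} - {k}. snd (v!i))"
    by (intro sum.cong refl) (auto simp: ag)
  have "(\<Sum>i<n. snd (u!i)) = (\<Sum>i<n. snd (v!i))"
    using u v mf by (simp add: code_M_def eq_neg_iff_add_eq_0[symmetric] add.commute)
  then have "snd (u!k) + (\<Sum>i\<in>{..<n} - {k}. snd (u!i)) = snd (v!k) + (\<Sum>i\<in>{..<n} - {k}. snd (v!i))"
    using sum_split_k[OF True, of "\<lambda>i. snd (u!i)"] sum_split_k[OF True, of "\<lambda>i. snd (v!i)"]
    by simp
  then have sk: "snd (u!k) = snd (v!k)" using o2 by simp
  have "\<And>i. i < n \<Longrightarrow> u!i = v!i"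
  proof -
    fix i assume "i < n"
    show "u!i = v!i"
    proof (cases "i = k")
      case True then show ?thesis using fk sk by (simp add: prod_eq_iff)
    qed (use ag \<open>i < n\<close> in auto)
  qed
  then show ?thesis using lu lv by (intro nth_equalityI) auto
qed


lemma card_lists_UNIV: "card {xs :: ('b::finite) list. length xs = m} = CARD('b) ^ m"
  using card_lists_length_eq[of "UNIV :: 'b set" m] by simp

lemma card_M:
  fixes \<alpha> :: "nat \<Rightarrow> nat \<Rightarrow> 'a::{field,finite}"
  shows "card (code_M (Suc m) \<alpha> \<beta>) = CARD('a \<times> 'a) ^ m"
proof -
  let ?M = "code_M (Suc m) \<alpha> \<beta>"
  have "bij_betw (take m) ?M {xs. length xs = m}"
  proof (rule bij_betw_imageI)
    show "inj_on (take m) ?M"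
    proof
      fix u v assume u: "u \<in> ?M" and v: "v \<in> ?M" and t: "take m u = take m v"
      show "u = v"
      proof (rule M_unique[OF u v, of m])
        fix i assume "i < Suc m" "i \<noteq> m"
        then have "i < m" by simp
        then show "u!i = v!i" using t by (metis nth_take)
      qed
    qed
    show "take m ` ?M = {xs. length xs = m}"
    proof
      show "take m ` ?M \<subseteq> {xs. length xs = m}" by (auto simp: code_M_def)
    next
      show "{xs. length xs = m} \<subseteq> take m ` ?M"
      proof
        fix xs :: "('a \<times> 'a) list" assume "xs \<in> {xs. length xs = m}"
        then have lx: "length xs = m" by simp
        define xl where "xl = - (\<Sum>i<m. fst (xs!i))"
        define yl where "yl = - (\<Sum>i<m. snd (xs!i)) - rfun (Suc m) \<alpha> \<beta> (map fst xs @ [xl])"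
        define w where "w = xs @ [(xl, yl)]"
        have wi: "\<And>i. i < m \<Longrightarrow> w!i = xs!i" by (simp add: w_def nth_append lx)
        have wm: "w!m = (xl,yl)" by (simp add: w_def nth_append lx)
        have s1: "(\<Sum>i<Suc m. fst (w!i)) = (\<Sum>i<m. fst (xs!i)) + xl"
          by (simp add: wi wm)
        have s2: "(\<Sum>i<Suc m. snd (w!i)) = (\<Sum>i<m. snd (xs!i)) + yl"
          by (simp add: wi wm)
        have "w \<in> ?M" unfolding code_M_def
          using s1 s2 by (simp add: w_def lx xl_def yl_def)
        moreover have "take m w = xs" by (simp add: w_def lx)
        ultimately show "xs \<in> take m ` ?M" by force
      qed
    qed
  qed
  then have "card ?M = card {xs :: ('a \<times> 'a) list. length xs = m}" by (rule bij_betw_same_card)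
  then show ?thesis by (simp add: card_lists_UNIV)
qed


lemma M_dist:
  assumes u: "u \<in> code_M n \<alpha> \<beta>" and v: "v \<in> code_M n \<alpha> \<beta>" and ne: "u \<noteq> v"
  shows "hamming_dist u v \<ge> 2"
proof (rule ccontr)
  assume "\<not> hamming_dist u v \<ge> 2"
  then have c: "card {i. i < length u \<and> u!i \<noteq> v!i} \<le> Suc 0" by (simp add: hamming_dist_def)
  let ?S = "{i. i < length u \<and> u!i \<noteq> v!i}"
  have fin: "finite ?S" by simp
  obtain k where k: "?S \<subseteq> {k}"
  proof (cases "?S = {}")
    case True then show ?thesis using that by blast
  next
    case False
    then obtain k where "k \<in> ?S" by blast
    then have "?S \<subseteq> {k}" using c fin card_le_Suc0_iff_eq by blast
    then show ?thesis using that by blast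
  qed
  have "u = v"
  proof (rule M_unique[OF u v, of k])
    fix i assume "i < n" "i \<noteq> k"
    then show "u!i = v!i" using k len_M[OF u] by blast
  qed
  then show False using ne by simp
qed

theorem theorem2:
  fixes n :: nat and \<alpha> :: "nat \<Rightarrow> nat \<Rightarrow> 'a::{field,finite}" and \<beta> :: "nat \<Rightarrow> 'a \<Rightarrow> 'a"
  assumes "n \<ge> 2"
  shows "mds_code n (code_M n \<alpha> \<beta>) \<and> topolinear n (code_M n \<alpha> \<beta>)"
proof -
  let ?M = "code_M n \<alpha> \<beta>"
  let ?H = "Hset n \<alpha> \<beta>"
  obtain m where nm: "n = Suc m" using assms by (cases n) auto
  have cM: "card ?M = CARD('a \<times> 'a) ^ (n - 1)" using card_M[of m \<alpha> \<beta>] nm by simp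
  have mds: "mds_code n ?M"
    unfolding mds_code_def
  proof (intro conjI ballI impI subsetI)
    fix x assume "x \<in> ?M" then show "x \<in> {xs. length xs = n}" using len_M by simp
  next
    fix x y assume "x \<in> ?M" "y \<in> ?M" "x \<noteq> y" then show "2 \<le> hamming_dist x y" by (rule M_dist)
  qed (rule cM)
  have "card ?M > 0" using cM by simp
  then have "?M \<noteq> {}" by auto
  then obtain z where z: "z \<in> ?M" by blast
  have sub: "iso_subgroup n ?H ?M" by (rule H_subgroup)
  have "bij_betw (\<lambda>h. iso_apply h z) ?H ?M"
  proof (rule bij_betw_imageI)
    show "inj_on (\<lambda>h. iso_apply h z) ?H"
    proof (rule inj_onI)
      fix g h assume "g \<in> ?H" "h \<in> ?H" "iso_apply g z = iso_apply h z"
      then show "g = h" using H_inj len_M[OF z] by blast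
    qed
    show "(\<lambda>h. iso_apply h z) ` ?H = ?M"
    proof
      show "(\<lambda>h. iso_apply h z) ` ?H \<subseteq> ?M"
        using sub z unfolding iso_subgroup_def autotopisms_def by blast
      show "?M \<subseteq> (\<lambda>h. iso_apply h z) ` ?H"
        using H_trans[OF z] by blast
    qed
  qed
  then have "card ?H = card ?M" by (rule bij_betw_same_card)
  then have "topolinear n ?M"
    unfolding topolinear_def
    by (intro exI[of _ ?H] conjI sub ballI H_trans) auto
  then show ?thesis using mds by simp
qed

end
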